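(* Assume (A1)–(A3) and (A6). Let $\Omega_n\in\mathcal O'$ ($n\in\mathbb N$) and let $\Omega\subseteq D$ be open with $\overline{\Gamma_0}\subseteq\partial\Omega$ and $\partial\Omega\setminus(Q_1\cup Q_2)=\Gamma_0$, such that $\partial\Omega_n\to\partial\Omega$ in the Hausdorff metric on compact sets. If the compact sets $\Gamma_1^n:=\partial\Omega_n\cap Q_1$ converge in the Hausdorff metric to a compact set $L$, then $L=\partial\Omega\cap Q_1$.
   Context: (A1) $D\subset\mathbb R^d$, $d\ge2$, open bounded. (A2) $V>0$, $\varepsilon>0$ fixed. (A3) $M\subset\overline D$ is a compact $(d-1)$-dimensional Lipschitz manifold with boundary, $\Gamma_0:=M\setminus\partial M$, with finitely many connected components having pairwise disjoint closures. (A6) $Q_1,Q_2\subseteq\overline D$ are disjoint compact sets with $\overline{\Gamma_0}\setminus(Q_1\cup Q_2)=\Gamma_0$. For $y,\xi\in\mathbb R^d$, $|\xi|=1$, $C(y,\xi,\varepsilon)=\{z:(z-y)\cdot\xi\ge|z-y|\cos\varepsilon,\ 0<|z-y|<\varepsilon\}$; an open $\Omega$ has the $\varepsilon$-cone property if for every $x\in\partial\Omega$ there is a unit $\xi_x$ with $C(y,\xi_x,\varepsilon)\subset\Omega$ for all $y\in\overline\Omega\cap B(x,\varepsilon)$. $\mathcal O'$ is the set of open connected $\Omega\subseteq D$ with the $\varepsilon$-cone property, $|\Omega|=V$, $\Gamma_0\subset\partial\Omega$ and $\partial\Omega\setminus(Q_1\cup Q_2)=\Gamma_0$ (for such $\Omega$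 one has $\overline{\Gamma_0}\subseteq\partial\Omega$). *)

theory Defs
  imports "HOL-Analysis.Analysis"
begin

text \<open>Model space for (d-1)-dimensional manifolds with boundary inside a
d-dimensional Euclidean space: a closed half of a hyperplane,
determined by orthonormal vectors u (normal of the hyperplane) and v
(inner normal of the edge).\<close>

definition half_hyperplane :: "'a::euclidean_space \<Rightarrow> 'a \<Rightarrow> 'a set" where
  "half_hyperplane u v = {x. x \<bullet> u = 0 \<and> x \<bullet> v \<ge> 0}"

definition is_lipschitz :: "'a::metric_space set \<Rightarrow> ('a \<Rightarrow> 'b::metric_space) \<Rightarrow> bool" where
  "is_lipschitz X f \<longleftrightarrow> (\<exists>C. C-lipschitz_on X f)"

definition lip_chart :: "'a::euclidean_space set \<Rightarrow> 'a \<Rightarrow> 'a set \<Rightarrow> 'a set \<Rightarrow>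
     ('a \<Rightarrow> 'a) \<Rightarrow> ('a \<Rightarrow> 'a) \<Rightarrow> 'a \<Rightarrow> 'a \<Rightarrow> bool" where
  "lip_chart M p U W f g u v \<longleftrightarrow>
     norm u = 1 \<and> norm v = 1 \<and> u \<bullet> v = 0 \<and>
     openin (top_of_set M) U \<and> p \<in> U \<and>
     openin (top_of_set (half_hyperplane u v)) W \<and>
     homeomorphism U W f g \<and> is_lipschitz U f \<and> is_lipschitz W g"

definition lipschitz_manifold_with_boundary :: "'a::euclidean_space set \<Rightarrow> bool" where
  "lipschitz_manifold_with_boundary M \<longleftrightarrow>
     (\<forall>p\<in>M. \<exists>U W f g u v. lip_chart M p U W f g u v)"

definition manifold_boundary :: "'a::euclidean_space set \<Rightarrow> 'a set" where
  "manifold_boundary M =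
     {p\<in>M. \<exists>U W f g u v. lip_chart M p U W f g u v \<and> f p \<bullet> v = 0}"

definition cone_set :: "'a::euclidean_space \<Rightarrow> 'a \<Rightarrow> real \<Rightarrow> 'a set" where
  "cone_set y \<xi> \<epsilon> = {z. (z - y) \<bullet> \<xi> \<ge> norm (z - y) * cos \<epsilon> \<and>
                         0 < norm (z - y) \<and> norm (z - y) < \<epsilon>}"

definition cone_property :: "real \<Rightarrow> 'a::euclidean_space set \<Rightarrow> bool" where
  "cone_property \<epsilon> \<Omega> \<longleftrightarrow>
     (\<forall>x\<in>frontier \<Omega>. \<exists>\<xi>. norm \<xi> = 1 \<and>
        (\<forall>y\<in>closure \<Omega> \<inter> ball x \<epsilon>. cone_set y \<xi> \<epsilon> \<subseteq> \<Omega>))"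

definition admissible :: "'a::euclidean_space set \<Rightarrow> real \<Rightarrow> real \<Rightarrow> 'a set \<Rightarrow>
      'a set \<Rightarrow> 'a set \<Rightarrow> 'a set \<Rightarrow> bool" where
  "admissible D V \<epsilon> \<Gamma>0 Q1 Q2 \<Omega> \<longleftrightarrow>
     open \<Omega> \<and> connected \<Omega> \<and> \<Omega> \<subseteq> D \<and> cone_property \<epsilon> \<Omega> \<and>
     emeasure lebesgue \<Omega> = ennreal V \<and>
     \<Gamma>0 \<subseteq> frontier \<Omega> \<and> frontier \<Omega> - (Q1 \<union> Q2) = \<Gamma>0"

text \<open>Hausdorff distance (used for nonempty compact sets).\<close>
definition hausdist :: "'a::metric_space set \<Rightarrow> 'a set \<Rightarrow> real" where
  "hausdist A B = max (SUP a\<in>A. infdist a B) (SUP b\<in>B. infdist b A)"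

text \<open>Convergence in the Hausdorff metric on compact sets (including the
empty set, which is at positive distance from every nonempty compact set).\<close>
definition hausdorff_conv :: "(nat \<Rightarrow> 'a::metric_space set) \<Rightarrow> 'a set \<Rightarrow> bool" where
  "hausdorff_conv A B \<longleftrightarrow>
     (B = {} \<and> (\<forall>\<^sub>F n in sequentially. A n = {})) \<or>
     (B \<noteq> {} \<and> (\<forall>\<^sub>F n in sequentially. A n \<noteq> {}) \<and>
        ((\<lambda>n. hausdist (A n) B) \<longlonglongrightarrow> 0))"

end

theory Submission
  imports Defs
begin

lemma hd_le1:
  fixes A B :: "'a::heine_borel set"
  assumes "compact A" "a \<in> A"
  shows "infdist a B \<le> hausdist A B"
proof -
  have "compact ((\<lambda>x. infdist x B) ` A)"
    by (intro compact_continuous_image continuous_on_infdist continuous_on_id assms)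
  then have "bdd_above ((\<lambda>x. infdist x B) ` A)"
    by (intro bounded_imp_bdd_above compact_imp_bounded)
  then have "infdist a B \<le> (SUP x\<in>A. infdist x B)"
    using assms by (intro cSUP_upper) auto
  then show ?thesis unfolding hausdist_def by linarith
qed

lemma hd_le2:
  fixes A B :: "'a::heine_borel set"
  assumes "compact B" "b \<in> B"
  shows "infdist b A \<le> hausdist A B"
proof -
  have "compact ((\<lambda>x. infdist x A) ` B)"
    by (intro compact_continuous_image continuous_on_infdist continuous_on_id assms)
  then have "bdd_above ((\<lambda>x. infdist x A) ` B)"
    by (intro bounded_imp_bdd_above compact_imp_bounded)
  then have "infdist b A \<le> (SUP x\<in>B. infdist x A)"
    using assms by (intro cSUP_upper) auto
  then show ?thesis unfolding hausdist_def by linarith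
qed

lemma approx_in:
  fixes A :: "nat \<Rightarrow> 'a::heine_borel set"
  assumes conv: "hausdorff_conv A L" and cA: "\<And>n. compact (A n)" and cL: "compact L"
    and x: "x \<in> L" and e: "e > 0"
  shows "\<forall>\<^sub>F n in sequentially. \<exists>b\<in>A n. dist x b < e"
proof -
  have ne: "\<forall>\<^sub>F n in sequentially. A n \<noteq> {}" and lim: "(\<lambda>n. hausdist (A n) L) \<longlonglongrightarrow> 0"
    using conv x unfolding hausdorff_conv_def by auto
  have "\<forall>\<^sub>F n in sequentially. hausdist (A n) L < e"
    using order_tendstoD(2)[OF lim e] .
  with ne show ?thesis
  proof eventually_elim
    case (elim n)
    have "infdist x (A n) < e" using hd_le2[OF cL x, of "A n"] elim by linarith
    moreover obtain b where "b \<in> A n" "infdist x (A n) = dist x b"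
      using infdist_attains_inf[of "A n" x] elim cA compact_imp_closed by blast
    ultimately show ?case by auto
  qed
qed

lemma approx_out:
  fixes A :: "nat \<Rightarrow> 'a::heine_borel set"
  assumes conv: "hausdorff_conv A L" and cA: "\<And>n. compact (A n)" and cL: "compact L"
    and ap: "\<And>e. e > 0 \<Longrightarrow> \<forall>\<^sub>F n in sequentially. \<exists>b\<in>A n. dist x b < e"
  shows "x \<in> L"
proof -
  have LNE: "L \<noteq> {}"
  proof
    assume "L = {}"
    then have "\<forall>\<^sub>F n in sequentially. A n = {}" using conv unfolding hausdorff_conv_def by auto
    from this ap[OF zero_less_one] have "\<forall>\<^sub>F n in sequentially. False"
      by eventually_elim auto
    then show False by simp
  qed
  then have lim: "(\<lambda>n. hausdist (A n) L) \<longlonglongrightarrow> 0"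
    using conv unfolding hausdorff_conv_def by auto
  have small: "infdist x L < 2 * e" if e: "e > 0" for e
  proof -
    have "\<forall>\<^sub>F n in sequentially. hausdist (A n) L < e"
      using order_tendstoD(2)[OF lim e] .
    then have "\<forall>\<^sub>F n in sequentially. hausdist (A n) L < e \<and> (\<exists>b\<in>A n. dist x b < e)"
      using ap[OF e] by eventually_elim auto
    then obtain n b where "hausdist (A n) L < e" "b \<in> A n" "dist x b < e"
      by (auto simp: eventually_sequentially)
    moreover have "infdist b L \<le> hausdist (A n) L" using hd_le1[OF cA] \<open>b \<in> A n\<close> by blast
    moreover have "infdist x L \<le> infdist b L + dist x b" by (rule infdist_triangle)
    ultimately show ?thesis by linarith
  qed
  have "infdist x L = 0"
  proof (rule ccontr)
    assume "infdist x L \<noteq> 0"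
    then have "infdist x L > 0" using infdist_nonneg[of x L] by linarith
    from small[of "infdist x L / 2"] this show False by linarith
  qed
  then show ?thesis using in_closed_iff_infdist_zero[OF compact_imp_closed[OF cL] LNE] by blast
qed

theorem mainTheorem6:
  fixes D M Q1 Q2 \<Omega> L :: "'a::euclidean_space set"
    and \<Omega>s :: "nat \<Rightarrow> 'a set"
    and V \<epsilon> :: real
  defines "\<Gamma>0 \<equiv> M - manifold_boundary M"
  assumes dim: "DIM('a) \<ge> 2"
    and A1: "open D" "bounded D"
    and A2: "V > 0" "\<epsilon> > 0"
    and A3: "compact M" "M \<subseteq> closure D" "lipschitz_manifold_with_boundary M"
       "finite {connected_component_set \<Gamma>0 x | x. x \<in> \<Gamma>0}"
       "\<forall>C\<in>{connected_component_set \<Gamma>0 x | x. x \<in> \<Gamma>0}.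
          \<forall>C'\<in>{connected_component_set \<Gamma>0 x | x. x \<in> \<Gamma>0}.
            C \<noteq> C' \<longrightarrow> closure C \<inter> closure C' = {}"
    and A6: "compact Q1" "compact Q2" "Q1 \<subseteq> closure D" "Q2 \<subseteq> closure D"
       "Q1 \<inter> Q2 = {}" "closure \<Gamma>0 - (Q1 \<union> Q2) = \<Gamma>0"
    and seq: "\<forall>n. admissible D V \<epsilon> \<Gamma>0 Q1 Q2 (\<Omega>s n)"
    and lim: "open \<Omega>" "\<Omega> \<subseteq> D" "closure \<Gamma>0 \<subseteq> frontier \<Omega>"
       "frontier \<Omega> - (Q1 \<union> Q2) = \<Gamma>0"
    and hconv: "hausdorff_conv (\<lambda>n. frontier (\<Omega>s n)) (frontier \<Omega>)"
    and L: "compact L" "hausdorff_conv (\<lambda>n. frontier (\<Omega>s n) \<inter> Q1) L"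
  shows "L = frontier \<Omega> \<inter> Q1"
proof -
  have adm: "\<Gamma>0 \<subseteq> frontier (\<Omega>s n)" "frontier (\<Omega>s n) - (Q1 \<union> Q2) = \<Gamma>0" "\<Omega>s n \<subseteq> D" for n
    using seq unfolding admissible_def by auto
  have cF: "compact (frontier (\<Omega>s n))" for n
    using adm(3) A1(2) bounded_subset compact_frontier_bounded by blast
  have cA: "compact (frontier (\<Omega>s n) \<inter> Q1)" for n
    using cF A6(1) by (simp add: compact_Int)
  have cFO: "compact (frontier \<Omega>)"
    using lim(2) A1(2) bounded_subset compact_frontier_bounded by blast
  show ?thesis
  proof
    show "L \<subseteq> frontier \<Omega> \<inter> Q1"
    proof
      fix x assume x: "x \<in> L"
      have ap: "\<forall>\<^sub>F n in sequentially. \<exists>b\<in>frontier (\<Omega>s n) \<inter> Q1. dist x b < e" if "e > 0" for e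
        using approx_in[OF L(2) cA L(1) x that] .
      have "x \<in> frontier \<Omega>"
      proof (rule approx_out[OF hconv cF cFO])
        fix e :: real assume "e > 0"
        from ap[OF this] show "\<forall>\<^sub>F n in sequentially. \<exists>b\<in>frontier (\<Omega>s n). dist x b < e"
          by eventually_elim auto
      qed
      moreover have "x \<in> Q1"
      proof (rule ccontr)
        assume "x \<notin> Q1"
        then have "infdist x Q1 > 0" using infdist_pos_not_in_closed[of Q1 x] A6(1) compact_imp_closed
          using ap[of 1] by (auto simp: eventually_sequentially)
        from ap[OF this] obtain n b where "b \<in> Q1" "dist x b < infdist x Q1"
          by (auto simp: eventually_sequentially)
        then show False using infdist_le[of b Q1 x] by linarith
      qed
      ultimately show "x \<in> frontier \<Omega> \<inter> Q1" by blast
    qed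
  next
    show "frontier \<Omega> \<inter> Q1 \<subseteq> L"
    proof
      fix x assume x: "x \<in> frontier \<Omega> \<inter> Q1"
      show "x \<in> L"
      proof (rule approx_out[OF L(2) cA L(1)])
        fix e :: real assume e: "e > 0"
        show "\<forall>\<^sub>F n in sequentially. \<exists>b\<in>frontier (\<Omega>s n) \<inter> Q1. dist x b < e"
        proof (cases "x \<in> closure \<Gamma>0")
          case True
          have "x \<in> frontier (\<Omega>s n)" for n
            using True adm(1)[of n] closure_minimal[of \<Gamma>0 "frontier (\<Omega>s n)"] by auto
          then show ?thesis using x e by (auto intro!: always_eventually bexI[of _ x])
        next
          case False
          have cl: "closed (closure \<Gamma>0 \<union> Q2)" using A6(2) compact_imp_closed by blast
          have xn: "x \<notin> closure \<Gamma>0 \<union> Q2" using False x A6(5) by blast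
          then obtain r where r: "r > 0" "ball x r \<inter> (closure \<Gamma>0 \<union> Q2) = {}"
            using cl open_contains_ball[of "- (closure \<Gamma>0 \<union> Q2)"] by blast
          define e' where "e' = min e r"
          have e': "e' > 0" using e r by (simp add: e'_def)
          from approx_in[OF hconv cF cFO _ e', of x] x
          have "\<forall>\<^sub>F n in sequentially. \<exists>b\<in>frontier (\<Omega>s n). dist x b < e'" by blast
          then show ?thesis
          proof eventually_elim
            case (elim n)
            then obtain b where b: "b \<in> frontier (\<Omega>s n)" "dist x b < e'" by blast
            then have "b \<in> ball x r" by (simp add: e'_def)
            then have "b \<notin> \<Gamma>0" "b \<notin> Q2" using r closure_subset by blast+
            then have "b \<in> Q1" using b(1) adm(2)[of n] by blast
            then show ?case using b e'_def by auto
          qed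
        qed
      qed
    qed
  qed
qed

end
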